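(* Let $M\subset\mathbb{R}^2$ be open with coordinates $(x,u)$, let $M^{(1)}$ be the first-order jet space with coordinates $(x,u,u_x)$, and consider the ODE $u_{xx}=\phi(x,u,u_x)$ with associated vector field $\mathbf{A}=\partial_x+u_x\partial_u+\phi\,\partial_{u_x}$. Let $(\partial_u,\lambda_1)$ and $(\partial_u,\lambda_2)$ be the canonical representatives of two non-equivalent generalized $\mathcal{C}^\infty$-symmetries of this ODE. Let $\mathbf{X}_i=\partial_u+\lambda_i\partial_{u_x}$, $\rho=\dfrac{\mathbf{X}_1(\lambda_2)-\mathbf{X}_2(\lambda_1)}{\lambda_1-\lambda_2}$, let $f_1,f_2\in C^\infty(M^{(1)})$ satisfy $\dfrac{\mathbf{X}_1(f_2)}{f_2}=\dfrac{\mathbf{X}_2(f_1)}{f_1}=\rho$, let $\mathbf{Y}_i=f_i\mathbf{X}_i$, $\rho_i=\lambda_i-\mathbf{A}(f_i)/f_i$, and let $g_1,g_2\in C^\infty(M^{(1)})$ satisfy $\mathbf{A}(g_1)=\rho_1g_1$, $\mathbf{Y}_2(g_1)=0$, $\mathbf{A}(g_2)=\rho_2g_2$, $\mathbf{Y}_1(g_2)=0$. Let $\{x,w_1,w_2\}$ be local coordinates on $M^{(1)}$ with $\mathbf{Y}_1=\partial_{w_2}$, $\mathbf{Y}_2=\partial_{w_1}$, and $\phi_i=\mathbf{A}(w_i)$, so that $\phi_1=\phi_1(x,w_1)$, $\phi_2=\phi_2(x,w_2)$ and $g_1=g_1(x,w_2)$, $g_2=g_2(x,w_1)$ in these coordinates.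 Let $\widehat{I_1}(x,w_1)$ and $\widehat{I_2}(x,w_2)$ be first integrals of the reduced equations $(w_1)_x=\phi_1(x,w_1)$ and $(w_2)_x=\phi_2(x,w_2)$ associated to the integrating factors $1/g_2(x,w_1)$ and $1/g_1(x,w_2)$ respectively (i.e. $(\widehat{I_1})_{w_1}=1/g_2$, $(\widehat{I_2})_{w_2}=1/g_1$). For constants $C_i\in\mathbb{R}$, write the auxiliary equations $\widehat{I_i}\big(x,w_i(x,u,u_x)\big)=C_i$ locally in the form $u_x=H_i(x,u,C_i)$ ($i=1,2$). Then, for $i=1,2$, the function $$\widetilde{\nu}_i(x,u)=\frac{1}{f_i\big(x,u,H_i(x,u,C_i)\big)\,g_i\big(x,u,H_i(x,u,C_i)\big)}$$ is an integrating factor of the auxiliary equation $u_x=H_i(x,u,C_i)$.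
   Context: All functions are smooth and all statements are local, on an open set where $\lambda_1-\lambda_2$, $f_1,f_2,g_1,g_2$ do not vanish. For smooth $\xi,\eta,\lambda$ on $M^{(1)}$ and $\mathbf{v}=\xi\partial_x+\eta\partial_u$, the $\lambda$-prolongation is $\mathbf{v}^{[\lambda,(1)]}=\mathbf{v}+\big((\mathbf{A}+\lambda)(\eta)-(\mathbf{A}+\lambda)(\xi)u_x\big)\partial_{u_x}$. The pair $(\mathbf{v},\lambda)$ is a generalized $\mathcal{C}^\infty$-symmetry of the ODE if $[\mathbf{v}^{[\lambda,(1)]},\mathbf{A}]=\lambda\,\mathbf{v}^{[\lambda,(1)]}-(\mathbf{A}+\lambda)(\xi)\,\mathbf{A}$. Two generalized $\mathcal{C}^\infty$-symmetries are $\mathbf{A}$-equivalent if $\{\mathbf{A},\mathbf{v}_1^{[\lambda_1,(1)]},\mathbf{v}_2^{[\lambda_2,(1)]}\}$ is linearly dependent over $C^\infty(M^{(1)})$; if $Q=\eta-\xi u_x$, the canonical representative of the class of $(\mathbf{v},\lambda)$ is $(\partial_u,\lambda+\mathbf{A}(Q)/Q)$. A first integral of a first-order ODE $w_x=\varphi(x,w)$ associated to an integrating factor $\nu$ is a function $\widehat{I}(x,w)$ with $\widehat{I}_w=\nu$ and $\widehat{I}_x=-\nu\varphi$. A function $\nu(x,u)$ is an integrating factor of a first-order ODE $u_x=H(x,u)$ if $\nu_x+(H\nu)_u=0$. *)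

theory Defs
  imports "HOL-Analysis.Analysis"
begin

text \<open>Functions on the jet space M^(1) with coordinates (x,u,p), p = u_x.\<close>
type_synonym fn3 = "real \<Rightarrow> real \<Rightarrow> real \<Rightarrow> real"
text \<open>Vector field a d/dx + b d/du + c d/dp, represented by its coefficients (a,b,c).\<close>
type_synonym vf3 = "fn3 \<times> fn3 \<times> fn3"

definition pd :: "nat \<Rightarrow> fn3 \<Rightarrow> fn3" where
  "pd i F = (\<lambda>x u p. if i = 0 then deriv (\<lambda>t. F t u p) x
                     else if i = 1 then deriv (\<lambda>t. F x t p) u
                     else deriv (\<lambda>t. F x u t) p)"

definition smooth3_on :: "(real \<times> real \<times> real) set \<Rightarrow> fn3 \<Rightarrow> bool" where
  "smooth3_on U F \<longleftrightarrow>
     (\<forall>ds. set ds \<subseteq> {0,1,2} \<longrightarrow> (\<lambda>(x,u,p). foldr pd ds F x u p) differentiable_on U)"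

definition pd2 :: "nat \<Rightarrow> (real \<Rightarrow> real \<Rightarrow> real) \<Rightarrow> real \<Rightarrow> real \<Rightarrow> real" where
  "pd2 i F = (\<lambda>x w. if i = 0 then deriv (\<lambda>t. F t w) x else deriv (\<lambda>t. F x t) w)"

definition smooth2_on :: "(real \<times> real) set \<Rightarrow> (real \<Rightarrow> real \<Rightarrow> real) \<Rightarrow> bool" where
  "smooth2_on W F \<longleftrightarrow>
     (\<forall>ds. set ds \<subseteq> {0,1} \<longrightarrow> (\<lambda>(x,w). foldr pd2 ds F x w) differentiable_on W)"

definition comp :: "nat \<Rightarrow> vf3 \<Rightarrow> fn3" where
  "comp i V = (if i = 0 then fst V else if i = 1 then fst (snd V) else snd (snd V))"

definition vapp :: "vf3 \<Rightarrow> fn3 \<Rightarrow> fn3" where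
  "vapp V F = (\<lambda>x u p. comp 0 V x u p * pd 0 F x u p + comp 1 V x u p * pd 1 F x u p
                      + comp 2 V x u p * pd 2 F x u p)"

definition lie :: "vf3 \<Rightarrow> vf3 \<Rightarrow> vf3" where
  "lie V W = ((\<lambda>x u p. vapp V (comp 0 W) x u p - vapp W (comp 0 V) x u p),
              (\<lambda>x u p. vapp V (comp 1 W) x u p - vapp W (comp 1 V) x u p),
              (\<lambda>x u p. vapp V (comp 2 W) x u p - vapp W (comp 2 V) x u p))"

definition Afield :: "fn3 \<Rightarrow> vf3" where
  "Afield phi = ((\<lambda>x u p. 1), (\<lambda>x u p. p), phi)"

definition lam_prolong :: "fn3 \<Rightarrow> fn3 \<Rightarrow> fn3 \<Rightarrow> fn3 \<Rightarrow> vf3" where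
  "lam_prolong phi xi eta lam =
     (xi, eta, (\<lambda>x u p. (vapp (Afield phi) eta x u p + lam x u p * eta x u p)
                       - (vapp (Afield phi) xi x u p + lam x u p * xi x u p) * p))"

definition gen_Cinf_sym :: "(real \<times> real \<times> real) set \<Rightarrow> fn3 \<Rightarrow> fn3 \<Rightarrow> fn3 \<Rightarrow> fn3 \<Rightarrow> bool" where
  "gen_Cinf_sym U phi xi eta lam \<longleftrightarrow>
     (\<forall>(x,u,p)\<in>U. \<forall>i\<in>{0,1,2::nat}.
        comp i (lie (lam_prolong phi xi eta lam) (Afield phi)) x u p
        = lam x u p * comp i (lam_prolong phi xi eta lam) x u p
          - (vapp (Afield phi) xi x u p + lam x u p * xi x u p) * comp i (Afield phi) x u p)"

definition A_equivalent ::
  "(real \<times> real \<times> real) set \<Rightarrow> fn3 \<Rightarrow> fn3 \<Rightarrow> fn3 \<Rightarrow> fn3 \<Rightarrow> fn3 \<Rightarrow> fn3 \<Rightarrow> fn3 \<Rightarrow> bool" where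
  "A_equivalent U phi xi1 eta1 lam1 xi2 eta2 lam2 \<longleftrightarrow>
     (\<exists>a b c. smooth3_on U a \<and> smooth3_on U b \<and> smooth3_on U c \<and>
        (\<exists>(x,u,p)\<in>U. a x u p \<noteq> 0 \<or> b x u p \<noteq> 0 \<or> c x u p \<noteq> 0) \<and>
        (\<forall>(x,u,p)\<in>U. \<forall>i\<in>{0,1,2::nat}.
           a x u p * comp i (Afield phi) x u p
           + b x u p * comp i (lam_prolong phi xi1 eta1 lam1) x u p
           + c x u p * comp i (lam_prolong phi xi2 eta2 lam2) x u p = 0))"

text \<open>Characteristic Q = eta - xi u_x and the lambda of the canonical representative
  (d/du, lam + A(Q)/Q).\<close>
definition charQ :: "fn3 \<Rightarrow> fn3 \<Rightarrow> fn3" where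
  "charQ xi eta = (\<lambda>x u p. eta x u p - xi x u p * p)"

definition canon_lambda :: "fn3 \<Rightarrow> fn3 \<Rightarrow> fn3 \<Rightarrow> fn3 \<Rightarrow> fn3" where
  "canon_lambda phi xi eta lam =
     (\<lambda>x u p. lam x u p + vapp (Afield phi) (charQ xi eta) x u p / charQ xi eta x u p)"

definition Xvf :: "fn3 \<Rightarrow> vf3" where
  "Xvf lam = ((\<lambda>x u p. 0), (\<lambda>x u p. 1), lam)"

definition vscale :: "fn3 \<Rightarrow> vf3 \<Rightarrow> vf3" where
  "vscale f V = ((\<lambda>x u p. f x u p * comp 0 V x u p), (\<lambda>x u p. f x u p * comp 1 V x u p),
                 (\<lambda>x u p. f x u p * comp 2 V x u p))"

definition first_integral_on ::
  "(real \<times> real) set \<Rightarrow> (real \<Rightarrow> real \<Rightarrow> real) \<Rightarrow> (real \<Rightarrow> real \<Rightarrow> real) \<Rightarrow> (real \<Rightarrow> real \<Rightarrow> real) \<Rightarrow> bool" where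
  "first_integral_on W Phi nu I \<longleftrightarrow>
     (\<forall>(x,w)\<in>W. pd2 1 I x w = nu x w \<and> pd2 0 I x w = - nu x w * Phi x w)"

definition integrating_factor_on ::
  "(real \<times> real) set \<Rightarrow> (real \<Rightarrow> real \<Rightarrow> real) \<Rightarrow> (real \<Rightarrow> real \<Rightarrow> real) \<Rightarrow> bool" where
  "integrating_factor_on V H nu \<longleftrightarrow>
     (\<forall>(x,u)\<in>V. deriv (\<lambda>t. nu t u) x + deriv (\<lambda>t. H x t * nu x t) u = 0)"

end

theory Submission
  imports Defs
begin


lemma chain3_raw:
  assumes F: "((\<lambda>(x,u,p). F x u p) has_derivative F') (at (a s, b s, c s))"
    and "(a has_real_derivative a') (at s)" "(b has_real_derivative b') (at s)"
        "(c has_real_derivative c') (at s)"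
  shows "((\<lambda>t. F (a t) (b t) (c t)) has_real_derivative F' (a', b', c')) (at s)"
proof -
  have g: "((\<lambda>t. (a t, b t, c t)) has_derivative (\<lambda>h. (a'*h, b'*h, c'*h))) (at s)"
    using assms(2-4) unfolding has_field_derivative_def
    by (intro has_derivative_Pair) auto
  have "((\<lambda>t. (\<lambda>(x,u,p). F x u p) (a t, b t, c t)) has_derivative (\<lambda>h. F' (a'*h, b'*h, c'*h))) (at s)"
    using has_derivative_compose[OF g F] by simp
  moreover have "linear F'" using F has_derivative_linear by blast
  then have "\<And>h. F' (a'*h, b'*h, c'*h) = h * F' (a',b',c')"
  proof -
    fix h
    have "(a'*h, b'*h, c'*h) = h *\<^sub>R (a',b',c')" by (simp add: mult.commute)
    then show "F' (a'*h, b'*h, c'*h) = h * F' (a',b',c')" using linear_cmul[OF \<open>linear F'\<close>, of h "(a',b',c')"] by (simp add: mult.commute)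
  qed
  ultimately have "((\<lambda>t. F (a t) (b t) (c t)) has_derivative (\<lambda>h. h * F' (a',b',c'))) (at s)" by simp
  moreover have "(\<lambda>h. h * F' (a',b',c')) = (*) (F' (a',b',c'))" by (auto simp: fun_eq_iff)
  ultimately show ?thesis unfolding has_field_derivative_def by simp
qed

lemma chain3:
  assumes F: "(\<lambda>(x,u,p). F x u p) differentiable (at (a s, b s, c s))"
    and "(a has_real_derivative a') (at s)" "(b has_real_derivative b') (at s)"
        "(c has_real_derivative c') (at s)"
  shows "((\<lambda>t. F (a t) (b t) (c t)) has_real_derivative
     a' * pd 0 F (a s) (b s) (c s) + b' * pd 1 F (a s) (b s) (c s) + c' * pd 2 F (a s) (b s) (c s)) (at s)"
proof -
  obtain F' where F': "((\<lambda>(x,u,p). F x u p) has_derivative F') (at (a s, b s, c s))"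
    using F unfolding differentiable_def by blast
  have lin: "linear F'" using F' has_derivative_linear by blast
  define x0 where "x0 = a s" define u0 where "u0 = b s" define p0 where "p0 = c s"
  have F0: "((\<lambda>(x,u,p). F x u p) has_derivative F') (at (x0,u0,p0))" using F' x0_def u0_def p0_def by simp
  have d0: "pd 0 F x0 u0 p0 = F' (1,0,0)"
    using chain3_raw[where a="\<lambda>t. t" and s=x0 and a'=1 and b="\<lambda>t. u0" and b'=0 and c="\<lambda>t. p0" and c'=0, OF F0]
    by (auto simp: pd_def intro!: DERIV_imp_deriv)
  have d1: "pd 1 F x0 u0 p0 = F' (0,1,0)"
    using chain3_raw[where a="\<lambda>t. x0" and s=u0 and a'=0 and b="\<lambda>t. t" and b'=1 and c="\<lambda>t. p0" and c'=0, OF F0]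
    by (auto simp: pd_def intro!: DERIV_imp_deriv)
  have d2: "pd 2 F x0 u0 p0 = F' (0,0,1)"
    using chain3_raw[where a="\<lambda>t. x0" and s=p0 and a'=0 and b="\<lambda>t. u0" and b'=0 and c="\<lambda>t. t" and c'=1, OF F0]
    by (auto simp: pd_def intro!: DERIV_imp_deriv)
  have "(a', b', c') = a' *\<^sub>R (1,0,0) + b' *\<^sub>R (0,1,0) + c' *\<^sub>R ((0,0,1)::real\<times>real\<times>real)"
    by simp
  then have "F' (a', b', c') = F' (a' *\<^sub>R (1,0,0) + b' *\<^sub>R (0,1,0) + c' *\<^sub>R ((0,0,1)::real\<times>real\<times>real))"
    by (rule arg_cong)
  also have "\<dots> = a' *\<^sub>R F' (1,0,0) + b' *\<^sub>R F' (0,1,0) + c' *\<^sub>R F' (0,0,1)"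
    by (simp only: linear_add[OF lin] linear_cmul[OF lin])
  finally have "F' (a', b', c') = a' * F' (1,0,0) + b' * F' (0,1,0) + c' * F' (0,0,1)"
    by simp
  then show ?thesis using chain3_raw[OF F' assms(2-4)] d0 d1 d2 x0_def u0_def p0_def by simp
qed

lemma chain2_raw:
  assumes F: "((\<lambda>(x,w). F x w) has_derivative F') (at (a s, b s))"
    and "(a has_real_derivative a') (at s)" "(b has_real_derivative b') (at s)"
  shows "((\<lambda>t. F (a t) (b t)) has_real_derivative F' (a', b')) (at s)"
proof -
  have g: "((\<lambda>t. (a t, b t)) has_derivative (\<lambda>h. (a'*h, b'*h))) (at s)"
    using assms(2-3) unfolding has_field_derivative_def
    by (intro has_derivative_Pair) auto
  have "((\<lambda>t. (\<lambda>(x,w). F x w) (a t, b t)) has_derivative (\<lambda>h. F' (a'*h, b'*h))) (at s)"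
    using has_derivative_compose[OF g F] by simp
  moreover have "linear F'" using F has_derivative_linear by blast
  then have "\<And>h. F' (a'*h, b'*h) = h * F' (a',b')"
  proof -
    fix h
    have "(a'*h, b'*h) = h *\<^sub>R (a',b')" by (simp add: mult.commute)
    then show "F' (a'*h, b'*h) = h * F' (a',b')" using linear_cmul[OF \<open>linear F'\<close>, of h "(a',b')"] by (simp add: mult.commute)
  qed
  ultimately have "((\<lambda>t. F (a t) (b t)) has_derivative (\<lambda>h. h * F' (a',b'))) (at s)" by simp
  moreover have "(\<lambda>h. h * F' (a',b')) = (*) (F' (a',b'))" by (auto simp: fun_eq_iff)
  ultimately show ?thesis unfolding has_field_derivative_def by simp
qed

lemma chain2:
  assumes F: "(\<lambda>(x,w). F x w) differentiable (at (a s, b s))"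
    and "(a has_real_derivative a') (at s)" "(b has_real_derivative b') (at s)"
  shows "((\<lambda>t. F (a t) (b t)) has_real_derivative
     a' * pd2 0 F (a s) (b s) + b' * pd2 1 F (a s) (b s)) (at s)"
proof -
  obtain F' where F': "((\<lambda>(x,w). F x w) has_derivative F') (at (a s, b s))"
    using F unfolding differentiable_def by blast
  have lin: "linear F'" using F' has_derivative_linear by blast
  define x0 where "x0 = a s" define u0 where "u0 = b s"
  have F0: "((\<lambda>(x,w). F x w) has_derivative F') (at (x0,u0))" using F' x0_def u0_def by simp
  have d0: "pd2 0 F x0 u0 = F' (1,0)"
    using chain2_raw[where a="\<lambda>t. t" and s=x0 and a'=1 and b="\<lambda>t. u0" and b'=0, OF F0]
    by (auto simp: pd2_def intro!: DERIV_imp_deriv)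
  have d1: "pd2 1 F x0 u0 = F' (0,1)"
    using chain2_raw[where a="\<lambda>t. x0" and s=u0 and a'=0 and b="\<lambda>t. t" and b'=1, OF F0]
    by (auto simp: pd2_def intro!: DERIV_imp_deriv)
  have "(a', b') = a' *\<^sub>R (1,0) + b' *\<^sub>R ((0,1)::real\<times>real)"
    by simp
  then have "F' (a', b') = F' (a' *\<^sub>R (1,0) + b' *\<^sub>R ((0,1)::real\<times>real))"
    by (rule arg_cong)
  also have "\<dots> = a' *\<^sub>R F' (1,0) + b' *\<^sub>R F' (0,1)"
    by (simp only: linear_add[OF lin] linear_cmul[OF lin])
  finally have "F' (a', b') = a' * F' (1,0) + b' * F' (0,1)"
    by simp
  then show ?thesis using chain2_raw[OF F' assms(2-3)] d0 d1 x0_def u0_def by simp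
qed


lemma alg:
  fixes Hx Hu H ph lam wx wu wp G Ph Ix Iw f fx fu fp g gx gu gp :: real
  assumes "Iw = 1/G" "Ix = -(1/G)*Ph" "G\<noteq>0" "Ph = 1*wx + H*wu + ph*wp"
   "1*Ix + (1*wx + 0*wu + Hx*wp)*Iw = 0"
   "0*Ix + (0*wx + 1*wu + Hu*wp)*Iw = 0"
   "wu + lam*wp = 0" "wp \<noteq> 0"
   "1*gx + H*gu + ph*gp = (lam - (1*fx + H*fu + ph*fp)/f)*g" "f\<noteq>0" "g\<noteq>0"
  shows "(0*(f*g) - 1*((1*fx + 0*fu + Hx*fp)*g + (1*gx + 0*gu + Hx*gp)*f))/((f*g)*(f*g))
       + (Hu*(1/(f*g)) + (0*(f*g) - 1*((0*fx+1*fu+Hu*fp)*g + (0*gx+1*gu+Hu*gp)*f))/((f*g)*(f*g)) * H) = 0"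
proof -
  have a: "wu + Hu*wp = 0" using assms(1,3,6) by simp
  have hu: "Hu = lam"
  proof -
    have "(Hu - lam)*wp = (wu + Hu*wp) - (wu + lam*wp)" by (simp add: algebra_simps)
    also have "\<dots> = 0" using a assms(7) by simp
    finally have "(Hu - lam)*wp = 0" .
    then show ?thesis using assms(8) by simp
  qed
  have "(wx + Hx*wp - Ph)/G = 0" using assms(5) unfolding assms(1,2)
    by (simp add: diff_divide_distrib add_divide_distrib)
  then have b: "wx + Hx*wp = Ph" using assms(3) by simp
  have hx: "Hx = ph - H*lam"
  proof -
    have "(Hx - (ph - H*lam))*wp = (wx + Hx*wp - Ph) + (Ph - (1*wx + H*wu + ph*wp)) + H*(wu + lam*wp)"
      by (simp add: algebra_simps)
    also have "\<dots> = 0" using b assms(4,7) by simp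
    finally have "(Hx - (ph - H*lam))*wp = 0" .
    then show ?thesis using assms(8) by simp
  qed
  have ag: "f*(gx + H*gu + ph*gp) = lam*f*g - (fx + H*fu + ph*fp)*g"
    using assms(9,10) by (simp add: field_simps)
  have N: "-((fx + Hx*fp)*g + (gx + Hx*gp)*f) + Hu*(f*g) - H*((fu + Hu*fp)*g + (gu + Hu*gp)*f) = 0"
    unfolding hu hx using ag by algebra
  have "(0*(f*g) - 1*((1*fx + 0*fu + Hx*fp)*g + (1*gx + 0*gu + Hx*gp)*f))/((f*g)*(f*g))
       + (Hu*(1/(f*g)) + (0*(f*g) - 1*((0*fx+1*fu+Hu*fp)*g + (0*gx+1*gu+Hu*gp)*f))/((f*g)*(f*g)) * H)
      = (-((fx + Hx*fp)*g + (gx + Hx*gp)*f) + Hu*(f*g) - H*((fu + Hu*fp)*g + (gu + Hu*gp)*f))/((f*g)*(f*g))"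
    using assms(10,11) by (simp add: field_simps)
  then show ?thesis using N by simp
qed


lemma key:
  fixes U :: "(real\<times>real\<times>real) set" and W V :: "(real\<times>real) set"
    and f g w phi lam :: fn3 and I G Phi H :: "real \<Rightarrow> real \<Rightarrow> real" and C :: real
  assumes U: "open U" and W: "open W" and V: "open V"
  and fd: "(\<lambda>(x,u,p). f x u p) differentiable_on U"
  and gd: "(\<lambda>(x,u,p). g x u p) differentiable_on U"
  and wd: "(\<lambda>(x,u,p). w x u p) differentiable_on U"
  and Id: "(\<lambda>(x,w). I x w) differentiable_on W"
  and Hd: "(\<lambda>(x,u). H x u) differentiable_on V"
  and img: "\<forall>(x,u,p)\<in>U. (x, w x u p) \<in> W"
  and wrel: "\<forall>(x,u,p)\<in>U. pd 1 w x u p + lam x u p * pd 2 w x u p = 0 \<and> pd 2 w x u p \<noteq> 0"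
  and Aw: "\<forall>(x,u,p)\<in>U. vapp (Afield phi) w x u p = Phi x (w x u p)"
  and Ifi: "first_integral_on W Phi (\<lambda>x w. 1 / G x w) I"
  and Gnz: "\<forall>(x,w)\<in>W. G x w \<noteq> 0"
  and Ag: "\<forall>(x,u,p)\<in>U. vapp (Afield phi) g x u p
          = (lam x u p - vapp (Afield phi) f x u p / f x u p) * g x u p"
  and fgnz: "\<forall>(x,u,p)\<in>U. f x u p \<noteq> 0 \<and> g x u p \<noteq> 0"
  and HV: "\<forall>(x,u)\<in>V. (x,u,H x u) \<in> U \<and> I x (w x u (H x u)) = C"
  shows "integrating_factor_on V H (\<lambda>x u. 1 / (f x u (H x u) * g x u (H x u)))"
  unfolding integrating_factor_on_def
proof (clarify)
  fix x u assume xu: "(x,u) \<in> V"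
  define h where "h = H x u"
  have P: "(x,u,h) \<in> U" using HV xu h_def by auto
  have Q: "(x, w x u h) \<in> W" using img P by auto
  have fda: "(\<lambda>(x,u,p). f x u p) differentiable (at (x,u,h))"
    using fd U P differentiable_on_eq_differentiable_at by blast
  have gda: "(\<lambda>(x,u,p). g x u p) differentiable (at (x,u,h))"
    using gd U P differentiable_on_eq_differentiable_at by blast
  have wda: "(\<lambda>(x,u,p). w x u p) differentiable (at (x,u,h))"
    using wd U P differentiable_on_eq_differentiable_at by blast
  have Ida: "(\<lambda>(x,w). I x w) differentiable (at (x, w x u h))"
    using Id W Q differentiable_on_eq_differentiable_at by blast
  have Hda: "(\<lambda>(x,u). H x u) differentiable (at (x,u))"
    using Hd V xu differentiable_on_eq_differentiable_at by blast
  define Hx where "Hx = pd2 0 H x u"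
  define Hu where "Hu = pd2 1 H x u"
  have dHx: "((\<lambda>t. H t u) has_real_derivative Hx) (at x)"
    using chain2[where F=H and a="\<lambda>t. t" and s=x and b="\<lambda>t. u" and a'=1 and b'=0] Hda
    by (simp add: Hx_def)
  have dHu: "((\<lambda>t. H x t) has_real_derivative Hu) (at u)"
    using chain2[where F=H and a="\<lambda>t. x" and s=u and b="\<lambda>t. t" and a'=0 and b'=1] Hda
    by (simp add: Hu_def)
  have tx: "\<And>F. (\<lambda>(x,u,p). F x u p) differentiable (at (x,u,h)) \<Longrightarrow>
     ((\<lambda>t. F t u (H t u)) has_real_derivative 1 * pd 0 F x u h + 0 * pd 1 F x u h + Hx * pd 2 F x u h) (at x)"
    using chain3[where a="\<lambda>t. t" and s=x and b="\<lambda>t. u" and c="\<lambda>t. H t u" and a'=1 and b'=0 and c'=Hx] dHx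
    by (simp add: h_def)
  have tu: "\<And>F. (\<lambda>(x,u,p). F x u p) differentiable (at (x,u,h)) \<Longrightarrow>
     ((\<lambda>t. F x t (H x t)) has_real_derivative 0 * pd 0 F x u h + 1 * pd 1 F x u h + Hu * pd 2 F x u h) (at u)"
    using chain3[where a="\<lambda>t. x" and s=u and b="\<lambda>t. t" and c="\<lambda>t. H x t" and a'=0 and b'=1 and c'=Hu] dHu
    by (simp add: h_def)
  have Jx: "((\<lambda>t. I t (w t u (H t u))) has_real_derivative
      1 * pd2 0 I x (w x u h) + (1 * pd 0 w x u h + 0 * pd 1 w x u h + Hx * pd 2 w x u h) * pd2 1 I x (w x u h)) (at x)"
    using chain2[where F=I and a="\<lambda>t. t" and s=x and b="\<lambda>t. w t u (H t u)" and a'=1, OF _ _ tx[OF wda]] Ida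
    by (simp add: h_def)
  have Ju: "((\<lambda>t. I x (w x t (H x t))) has_real_derivative
      0 * pd2 0 I x (w x u h) + (0 * pd 0 w x u h + 1 * pd 1 w x u h + Hu * pd 2 w x u h) * pd2 1 I x (w x u h)) (at u)"
    using chain2[where F=I and a="\<lambda>t. x" and s=u and b="\<lambda>t. w x t (H x t)" and a'=0, OF _ _ tu[OF wda]] Ida
    by (simp add: h_def)
  have Sx: "open ((\<lambda>t. (t,u)) -` V)" by (rule open_vimage[OF V]) (intro continuous_intros)
  have Su: "open ((\<lambda>t. (x,t)) -` V)" by (rule open_vimage[OF V]) (intro continuous_intros)
  have Jx0: "((\<lambda>t. I t (w t u (H t u))) has_real_derivative 0) (at x)"
    by (rule has_field_derivative_transform_within_open[OF DERIV_const[of C] Sx]) (use xu HV in auto)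
  have Ju0: "((\<lambda>t. I x (w x t (H x t))) has_real_derivative 0) (at u)"
    by (rule has_field_derivative_transform_within_open[OF DERIV_const[of C] Su]) (use xu HV in auto)
  have E1: "1 * pd2 0 I x (w x u h) + (1 * pd 0 w x u h + 0 * pd 1 w x u h + Hx * pd 2 w x u h) * pd2 1 I x (w x u h) = 0"
    using DERIV_unique[OF Jx Jx0] .
  have E2: "0 * pd2 0 I x (w x u h) + (0 * pd 0 w x u h + 1 * pd 1 w x u h + Hu * pd 2 w x u h) * pd2 1 I x (w x u h) = 0"
    using DERIV_unique[OF Ju Ju0] .
  have nux: "((\<lambda>t. 1 / (f t u (H t u) * g t u (H t u))) has_real_derivative
     (0 * (f x u h * g x u h) - 1 * ((1 * pd 0 f x u h + 0 * pd 1 f x u h + Hx * pd 2 f x u h) * g x u h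
        + (1 * pd 0 g x u h + 0 * pd 1 g x u h + Hx * pd 2 g x u h) * f x u h)) / ((f x u h * g x u h) * (f x u h * g x u h))) (at x)"
    using DERIV_divide[OF DERIV_const[of 1] DERIV_mult[OF tx[OF fda] tx[OF gda]]] fgnz P
    by (auto simp: h_def)
  have nuu: "((\<lambda>t. H x t * (1 / (f x t (H x t) * g x t (H x t)))) has_real_derivative
     Hu * (1 / (f x u h * g x u h)) + (0 * (f x u h * g x u h) - 1 * ((0 * pd 0 f x u h + 1 * pd 1 f x u h + Hu * pd 2 f x u h) * g x u h
        + (0 * pd 0 g x u h + 1 * pd 1 g x u h + Hu * pd 2 g x u h) * f x u h)) / ((f x u h * g x u h) * (f x u h * g x u h)) * H x u) (at u)"
    using DERIV_mult[OF dHu DERIV_divide[OF DERIV_const[of 1] DERIV_mult[OF tu[OF fda] tu[OF gda]]]] fgnz P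
    by (auto simp: h_def)
  have fi: "pd2 1 I x (w x u h) = 1 / G x (w x u h) \<and> pd2 0 I x (w x u h) = - (1 / G x (w x u h)) * Phi x (w x u h)"
    using Ifi Q unfolding first_integral_on_def by auto
  have Awp: "vapp (Afield phi) w x u h = Phi x (w x u h)" using Aw P by auto
  have Agp: "vapp (Afield phi) g x u h = (lam x u h - vapp (Afield phi) f x u h / f x u h) * g x u h"
    using Ag P by auto
  have wr: "pd 1 w x u h + lam x u h * pd 2 w x u h = 0 \<and> pd 2 w x u h \<noteq> 0" using wrel P by auto
  have "deriv (\<lambda>t. 1 / (f t u (H t u) * g t u (H t u))) x + deriv (\<lambda>t. H x t * (1 / (f x t (H x t) * g x t (H x t)))) u = 0"
    unfolding DERIV_imp_deriv[OF nux] DERIV_imp_deriv[OF nuu] h_def[symmetric]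
    apply (rule alg[where Iw = "pd2 1 I x (w x u h)" and Ix = "pd2 0 I x (w x u h)" and G = "G x (w x u h)"
       and Ph = "Phi x (w x u h)" and ph = "phi x u h" and wx = "pd 0 w x u h" and wu = "pd 1 w x u h" and wp = "pd 2 w x u h"
       and lam = "lam x u h"])
    using fi Gnz Q Awp E1 E2 wr Agp fgnz P
    by (auto simp: vapp_def Afield_def comp_def)
  then show "deriv (\<lambda>t. 1 / (f t u (H t u) * g t u (H t u))) x + deriv (\<lambda>t. H x t * (1 / (f x t (H x t) * g x t (H x t)))) u = 0" .
qed
theorem theorem6:
  fixes U :: "(real \<times> real \<times> real) set"
    and phi xi1 eta1 mu1 xi2 eta2 mu2 lam1 lam2 f1 f2 g1 g2 w1 w2 :: fn3
    and W1 W2 :: "(real \<times> real) set"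
    and Phi1 Phi2 G1 G2 I1 I2 :: "real \<Rightarrow> real \<Rightarrow> real"
  assumes U_open: "open U"
    and phi_smooth: "smooth3_on U phi"
    \<comment> \<open>two non-equivalent generalized C-infinity-symmetries\<close>
    and sm1: "smooth3_on U xi1" "smooth3_on U eta1" "smooth3_on U mu1"
    and sm2: "smooth3_on U xi2" "smooth3_on U eta2" "smooth3_on U mu2"
    and sym1: "gen_Cinf_sym U phi xi1 eta1 mu1"
    and sym2: "gen_Cinf_sym U phi xi2 eta2 mu2"
    and noneq: "\<not> A_equivalent U phi xi1 eta1 mu1 xi2 eta2 mu2"
    \<comment> \<open>(d/du, lam_i) are their canonical representatives\<close>
    and Q1: "\<forall>(x,u,p)\<in>U. charQ xi1 eta1 x u p \<noteq> 0"
    and Q2: "\<forall>(x,u,p)\<in>U. charQ xi2 eta2 x u p \<noteq> 0"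
    and lam1_def: "\<forall>(x,u,p)\<in>U. lam1 x u p = canon_lambda phi xi1 eta1 mu1 x u p"
    and lam2_def: "\<forall>(x,u,p)\<in>U. lam2 x u p = canon_lambda phi xi2 eta2 mu2 x u p"
    and lam_ne: "\<forall>(x,u,p)\<in>U. lam1 x u p - lam2 x u p \<noteq> 0"
    \<comment> \<open>f1, f2\<close>
    and f_smooth: "smooth3_on U f1" "smooth3_on U f2"
    and f_nz: "\<forall>(x,u,p)\<in>U. f1 x u p \<noteq> 0 \<and> f2 x u p \<noteq> 0"
    and f_eq: "\<forall>(x,u,p)\<in>U.
        (let rho = (vapp (Xvf lam1) lam2 x u p - vapp (Xvf lam2) lam1 x u p)
                   / (lam1 x u p - lam2 x u p)
         in vapp (Xvf lam1) f2 x u p / f2 x u p = rho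
          \<and> vapp (Xvf lam2) f1 x u p / f1 x u p = rho)"
    \<comment> \<open>g1, g2 (Y_i = f_i X_i, rho_i = lam_i - A(f_i)/f_i)\<close>
    and g_smooth: "smooth3_on U g1" "smooth3_on U g2"
    and g_nz: "\<forall>(x,u,p)\<in>U. g1 x u p \<noteq> 0 \<and> g2 x u p \<noteq> 0"
    and g_eq: "\<forall>(x,u,p)\<in>U.
        vapp (Afield phi) g1 x u p
          = (lam1 x u p - vapp (Afield phi) f1 x u p / f1 x u p) * g1 x u p
      \<and> vapp (vscale f2 (Xvf lam2)) g1 x u p = 0
      \<and> vapp (Afield phi) g2 x u p
          = (lam2 x u p - vapp (Afield phi) f2 x u p / f2 x u p) * g2 x u p
      \<and> vapp (vscale f1 (Xvf lam1)) g2 x u p = 0"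
    \<comment> \<open>local coordinates {x, w1, w2} with Y1 = d/dw2, Y2 = d/dw1\<close>
    and w_smooth: "smooth3_on U w1" "smooth3_on U w2"
    and w_inj: "inj_on (\<lambda>(x,u,p). (x, w1 x u p, w2 x u p)) U"
    and w_jac: "\<forall>(x,u,p)\<in>U. pd 1 w1 x u p * pd 2 w2 x u p - pd 2 w1 x u p * pd 1 w2 x u p \<noteq> 0"
    and Y_coords: "\<forall>(x,u,p)\<in>U.
        vapp (vscale f1 (Xvf lam1)) w1 x u p = 0 \<and> vapp (vscale f1 (Xvf lam1)) w2 x u p = 1
      \<and> vapp (vscale f2 (Xvf lam2)) w1 x u p = 1 \<and> vapp (vscale f2 (Xvf lam2)) w2 x u p = 0"
    \<comment> \<open>phi_i = A(w_i) = Phi_i(x,w_i), g1 = G1(x,w2), g2 = G2(x,w1) in these coordinates\<close>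
    and W_open: "open W1" "open W2"
    and W_img: "\<forall>(x,u,p)\<in>U. (x, w1 x u p) \<in> W1 \<and> (x, w2 x u p) \<in> W2"
    and Phi_smooth: "smooth2_on W1 Phi1" "smooth2_on W2 Phi2"
    and G_smooth: "smooth2_on W2 G1" "smooth2_on W1 G2"
    and G_nz: "\<forall>(x,w)\<in>W2. G1 x w \<noteq> 0" "\<forall>(x,w)\<in>W1. G2 x w \<noteq> 0"
    and Phi_coord: "\<forall>(x,u,p)\<in>U.
        vapp (Afield phi) w1 x u p = Phi1 x (w1 x u p)
      \<and> vapp (Afield phi) w2 x u p = Phi2 x (w2 x u p)"
    and G_coord: "\<forall>(x,u,p)\<in>U. g1 x u p = G1 x (w2 x u p) \<and> g2 x u p = G2 x (w1 x u p)"
    \<comment> \<open>first integrals of the reduced equations with integrating factors 1/G2, 1/G1\<close>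
    and I_smooth: "smooth2_on W1 I1" "smooth2_on W2 I2"
    and I1_fi: "first_integral_on W1 Phi1 (\<lambda>x w. 1 / G2 x w) I1"
    and I2_fi: "first_integral_on W2 Phi2 (\<lambda>x w. 1 / G1 x w) I2"
  shows
    "(\<forall>(C1::real) V H. open V \<and> smooth2_on V H \<and>
        (\<forall>(x,u)\<in>V. (x, u, H x u) \<in> U \<and> I1 x (w1 x u (H x u)) = C1)
        \<longrightarrow> integrating_factor_on V H (\<lambda>x u. 1 / (f1 x u (H x u) * g1 x u (H x u))))
   \<and> (\<forall>(C2::real) V H. open V \<and> smooth2_on V H \<and>
        (\<forall>(x,u)\<in>V. (x, u, H x u) \<in> U \<and> I2 x (w2 x u (H x u)) = C2)
        \<longrightarrow> integrating_factor_on V H (\<lambda>x u. 1 / (f2 x u (H x u) * g2 x u (H x u))))"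
  proof -
  have s3: "\<And>F. smooth3_on U F \<Longrightarrow> (\<lambda>(x,u,p). F x u p) differentiable_on U"
    unfolding smooth3_on_def by (metis empty_subsetI foldr_Nil id_apply list.set(1))
  have s2: "\<And>W F. smooth2_on W F \<Longrightarrow> (\<lambda>(x,w). F x w) differentiable_on W"
    unfolding smooth2_on_def by (metis empty_subsetI foldr_Nil id_apply list.set(1))
  have wrel1: "\<forall>(x,u,p)\<in>U. pd 1 w1 x u p + lam1 x u p * pd 2 w1 x u p = 0 \<and> pd 2 w1 x u p \<noteq> 0"
  proof (clarify)
    fix x u p assume P: "(x,u,p) \<in> U"
    have a: "f1 x u p * (pd 1 w1 x u p + lam1 x u p * pd 2 w1 x u p) = 0"
      "f2 x u p * (pd 1 w1 x u p + lam2 x u p * pd 2 w1 x u p) = 1"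
      using Y_coords P by (auto simp: vapp_def vscale_def Xvf_def comp_def algebra_simps)
    have b: "pd 1 w1 x u p + lam1 x u p * pd 2 w1 x u p = 0" using a(1) f_nz P by auto
    moreover have "pd 2 w1 x u p \<noteq> 0"
    proof
      assume "pd 2 w1 x u p = 0" then show False using a(2) b by simp
    qed
    ultimately show "pd 1 w1 x u p + lam1 x u p * pd 2 w1 x u p = 0 \<and> pd 2 w1 x u p \<noteq> 0" by simp
  qed
  have wrel2: "\<forall>(x,u,p)\<in>U. pd 1 w2 x u p + lam2 x u p * pd 2 w2 x u p = 0 \<and> pd 2 w2 x u p \<noteq> 0"
  proof (clarify)
    fix x u p assume P: "(x,u,p) \<in> U"
    have a: "f2 x u p * (pd 1 w2 x u p + lam2 x u p * pd 2 w2 x u p) = 0"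
      "f1 x u p * (pd 1 w2 x u p + lam1 x u p * pd 2 w2 x u p) = 1"
      using Y_coords P by (auto simp: vapp_def vscale_def Xvf_def comp_def algebra_simps)
    have b: "pd 1 w2 x u p + lam2 x u p * pd 2 w2 x u p = 0" using a(1) f_nz P by auto
    moreover have "pd 2 w2 x u p \<noteq> 0"
    proof
      assume "pd 2 w2 x u p = 0" then show False using a(2) b by simp
    qed
    ultimately show "pd 1 w2 x u p + lam2 x u p * pd 2 w2 x u p = 0 \<and> pd 2 w2 x u p \<noteq> 0" by simp
  qed
  show ?thesis
  proof (intro conjI allI impI)
    fix C1 :: real and V H
    assume h: "open V \<and> smooth2_on V H \<and> (\<forall>(x,u)\<in>V. (x, u, H x u) \<in> U \<and> I1 x (w1 x u (H x u)) = C1)"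
    show "integrating_factor_on V H (\<lambda>x u. 1 / (f1 x u (H x u) * g1 x u (H x u)))"
      by (rule key[where U=U and W=W1 and w=w1 and I=I1 and lam=lam1 and phi=phi and Phi=Phi1 and G=G2 and C=C1])
        (use U_open W_open h s3 s2 f_smooth g_smooth w_smooth I_smooth W_img wrel1 Phi_coord I1_fi G_nz g_eq f_nz g_nz in auto)
  next
    fix C2 :: real and V H
    assume h: "open V \<and> smooth2_on V H \<and> (\<forall>(x,u)\<in>V. (x, u, H x u) \<in> U \<and> I2 x (w2 x u (H x u)) = C2)"
    show "integrating_factor_on V H (\<lambda>x u. 1 / (f2 x u (H x u) * g2 x u (H x u)))"
      by (rule key[where U=U and W=W2 and w=w2 and I=I2 and lam=lam2 and phi=phi and Phi=Phi2 and G=G1 and C=C2])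
        (use U_open W_open h s3 s2 f_smooth g_smooth w_smooth I_smooth W_img wrel2 Phi_coord I2_fi G_nz g_eq f_nz g_nz in auto)
  qed
qed

end
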